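(* Let $(z,z')$ be admissible with $t=zz'=1$. Then $$\sigma^{(zz')}_1=\phi_{z,-z}*\phi^{(-)}_{-z',z'},$$ the (additive) convolution of a distribution supported on $[0,1]$ and a distribution supported on $[-1,0]$.
   Context: $\sigma^{(zz')}_1$ is the unique measure on $[-1,1]$ with moments $\int x^l\sigma^{(zz')}_1(dx)=\sum_{p+q=l,\ p,q\ge0}\frac{(-1)^q\,t\,(z+1)_p(-z+1)_q(z'+1)_p(-z'+1)_q}{(t)_{p+q+1}(p+q+1)p!q!}$, $l\ge0$ (it is the first controlling measure of the spectral $z$-measure $P_{zz'}$). Admissible parameters: either $z'=\bar z$, $z\notin\mathbb Z$, or $z,z'$ real in a common interval $(m,m+1)$, $m\in\mathbb Z$. For $a\in\mathbb C$, $\phi_a(u)=u_+^a/\Gamma(a+1)$ is the distribution on $\mathbb R$ supported on $[0,\infty)$, defined for $\operatorname{Re}a>-1$ as a locally integrable function and for other $a$ by analytic continuation in $a$. For $a,b\in\mathbb C$, $\phi_{ab}(u)=\phi_a(u)\phi_b(1-u)$ (a distribution supported on $[0,1]$), and $\phi^{(-)}_{ab}(u)=\phi_{ab}(-u)$ (supported on $[-1,0]$). *)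

theory Defs
  imports "HOL-Analysis.Analysis"
begin

definition admissible :: "complex \<Rightarrow> complex \<Rightarrow> bool" where
  "admissible z z' \<longleftrightarrow>
     (z' = cnj z \<and> z \<notin> \<int>) \<or>
     (z \<in> \<real> \<and> z' \<in> \<real> \<and>
      (\<exists>m::int. of_int m < Re z \<and> Re z < of_int m + 1 \<and>
                 of_int m < Re z' \<and> Re z' < of_int m + 1))"

text \<open>The l-th moment of the first controlling measure, with t = z z'.\<close>
definition sigma1_moment :: "complex \<Rightarrow> complex \<Rightarrow> nat \<Rightarrow> complex" where
  "sigma1_moment z z' l =
     (let t = z * z' in
      \<Sum>p = 0..l. let q = l - p in
        ((-1) ^ q * t * pochhammer (z + 1) p * pochhammer (- z + 1) q
            * pochhammer (z' + 1) p * pochhammer (- z' + 1) q)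
        / (pochhammer t (p + q + 1) * of_nat (p + q + 1) * fact p * fact q))"

definition phi :: "complex \<Rightarrow> real \<Rightarrow> complex" where
  "phi a u = (if 0 < u then (complex_of_real u) powr a * rGamma (a + 1) else 0)"

definition phi2 :: "complex \<Rightarrow> complex \<Rightarrow> real \<Rightarrow> complex" where
  "phi2 a b u = phi a u * phi b (1 - u)"

definition phi2_minus :: "complex \<Rightarrow> complex \<Rightarrow> real \<Rightarrow> complex" where
  "phi2_minus a b u = phi2 a b (- u)"

definition conv :: "(real \<Rightarrow> complex) \<Rightarrow> (real \<Rightarrow> complex) \<Rightarrow> real \<Rightarrow> complex" where
  "conv f g x = (LINT u|lborel. f u * g (x - u))"

definition test_function :: "(real \<Rightarrow> complex) \<Rightarrow> bool" where
  "test_function \<psi> \<longleftrightarrow>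
     (\<exists>D :: nat \<Rightarrow> real \<Rightarrow> complex. D 0 = \<psi> \<and>
        (\<forall>k x. (D k has_vector_derivative D (Suc k) x) (at x))) \<and>
     bounded {x. \<psi> x \<noteq> 0}"

end

theory Submission
  imports Defs "HOL-Complex_Analysis.Complex_Analysis"
begin

definition gfun :: "complex \<Rightarrow> real \<Rightarrow> complex" where
  "gfun a t = indicator {0<..} t *\<^sub>R (complex_of_real t powr (a - 1) / complex_of_real (exp t))"

lemma gfun_measurable [measurable]: "gfun a \<in> borel_measurable borel"
  unfolding gfun_def by measurable

lemma gfun_integrable:
  assumes "Re a > 0"
  shows "integrable lborel (gfun a)" "integral\<^sup>L lborel (gfun a) = Gamma a"
proof -
  have A: "set_integrable lebesgue {0<..} (\<lambda>t. complex_of_real t powr (a - 1) / complex_of_real (exp t))"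
    using absolutely_integrable_Gamma_integral'[OF assms] .
  have "integrable lebesgue (gfun a)"
    using A unfolding set_integrable_def gfun_def .
  thus I: "integrable lborel (gfun a)"
    by (subst (asm) integrable_completion) auto
  have "(LINT t:{0<..}|lebesgue. complex_of_real t powr (a - 1) / complex_of_real (exp t)) = Gamma a"
    using set_lebesgue_integral_eq_integral(2)[OF A] Gamma_integral_complex'[OF assms]
    by (simp add: integral_unique)
  hence "integral\<^sup>L lebesgue (gfun a) = Gamma a"
    unfolding set_lebesgue_integral_def gfun_def .
  thus "integral\<^sup>L lborel (gfun a) = Gamma a"
    by (subst (asm) integral_completion) auto
qed

definition bfun :: "complex \<Rightarrow> complex \<Rightarrow> real \<Rightarrow> complex" where
  "bfun a b x = indicator {0<..<1} x *\<^sub>R (complex_of_real x powr (a - 1) * complex_of_real (1 - x) powr (b - 1))"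

lemma bfun_measurable [measurable]: "bfun a b \<in> borel_measurable borel"
  unfolding bfun_def by measurable

lemma norm_ofreal_powr: "0 \<le> x \<Longrightarrow> norm (complex_of_real x powr a) = x powr Re a"
  by (simp add: norm_powr_real_powr)

lemma bfun_integrable:
  assumes "Re a > 0" "Re b > 0"
  shows "integrable lborel (bfun a b)"
proof -
  have I: "integrable lborel (\<lambda>t. indicator {0..1} t *\<^sub>R (t powr (Re a - 1) * (1 - t) powr (Re b - 1)))"
    using integrable_Beta[of "Re a" "Re b"] assms unfolding set_integrable_def by simp
  show ?thesis
  proof (rule Bochner_Integration.integrable_bound[OF I])
    show "AE x in lborel. norm (bfun a b x) \<le> norm (indicator {0..1} x *\<^sub>R (x powr (Re a - 1) * (1 - x) powr (Re b - 1)))"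
      by (intro AE_I2) (auto simp: bfun_def indicator_def norm_mult norm_ofreal_powr simp del: of_real_diff)
  qed simp
qed

lemma complex_Beta:
  assumes a: "Re a > 0" and b: "Re b > 0"
  shows "integral\<^sup>L lborel (bfun a b) = Beta a b"
proof -
  define K where "K = (\<lambda>t u. gfun a t * gfun b (u - t))"
  define B where "B = integral\<^sup>L lborel (bfun a b)"
  have Ka[measurable]: "gfun a \<in> borel_measurable borel" "gfun b \<in> borel_measurable borel" by simp_all
  have Kmeas[measurable]: "(\<lambda>(t,u). K t u) \<in> borel_measurable (lborel \<Otimes>\<^sub>M lborel)"
    unfolding K_def by measurable
  have shift: "integral\<^sup>L lborel (\<lambda>u. f (u - t)) = integral\<^sup>L lborel f" for f :: "real \<Rightarrow> complex" and t
    using lborel_integral_real_affine[of 1 f "-t"] by simp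
  have shiftr: "integral\<^sup>L lborel (\<lambda>u. f (u - t)) = integral\<^sup>L lborel f" for f :: "real \<Rightarrow> real" and t
    using lborel_integral_real_affine[of 1 f "-t"] by simp
  have shifti: "integrable lborel (\<lambda>u. f (u - t))" if "integrable lborel f" for f :: "real \<Rightarrow> complex" and t
    using lborel_integrable_real_affine[OF that, of 1 "-t"] by simp
  have ga: "integrable lborel (gfun a)" "integral\<^sup>L lborel (gfun a) = Gamma a"
    using gfun_integrable[OF a] by auto
  have gb: "integrable lborel (gfun b)" "integral\<^sup>L lborel (gfun b) = Gamma b"
    using gfun_integrable[OF b] by auto
  have gab: "integrable lborel (gfun (a+b))" "integral\<^sup>L lborel (gfun (a+b)) = Gamma (a+b)"
    using gfun_integrable[of "a+b"] a b by auto
  have step1: "(\<integral>t. (\<integral>u. K t u \<partial>lborel) \<partial>lborel) = Gamma a * Gamma b"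
  proof -
    have "(\<integral>u. K t u \<partial>lborel) = gfun a t * Gamma b" for t
      unfolding K_def by (simp add: shift gb)
    hence "(\<integral>t. (\<integral>u. K t u \<partial>lborel) \<partial>lborel) = (\<integral>t. gfun a t * Gamma b \<partial>lborel)" by simp
    also have "\<dots> = Gamma a * Gamma b" using ga by simp
    finally show ?thesis .
  qed
  have intK: "integrable (lborel \<Otimes>\<^sub>M lborel) (\<lambda>(t,u). K t u)"
  proof (rule lborel_pair.Fubini_integrable)
    have "(\<integral>u. norm (K t u) \<partial>lborel) = norm (gfun a t) * (\<integral>u. norm (gfun b u) \<partial>lborel)" for t
      unfolding K_def norm_mult
      using shiftr[of "\<lambda>u. norm (gfun b u)" t] by simp
    thus "integrable lborel (\<lambda>t. \<integral>u. norm (case (t, u) of (t, u) \<Rightarrow> K t u) \<partial>lborel)"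
      using ga by simp
    show "AE t in lborel. integrable lborel (\<lambda>u. case (t, u) of (t, u) \<Rightarrow> K t u)"
      unfolding K_def using shifti[OF gb(1)] by simp
  qed simp
  have step2: "(\<integral>u. (\<integral>t. K t u \<partial>lborel) \<partial>lborel) = (\<integral>t. (\<integral>u. K t u \<partial>lborel) \<partial>lborel)"
    by (rule lborel_pair.Fubini_integral[OF intK])
  have step3: "(\<integral>t. K t u \<partial>lborel) = B * gfun (a + b) u" for u
  proof (cases "u > 0")
    case False
    hence "K t u = 0" for t unfolding K_def gfun_def by (auto simp: indicator_def)
    thus ?thesis using False by (simp add: gfun_def)
  next
    case True
    have eq: "K (u * x) u = bfun a b x * (complex_of_real u powr (a + b - 2) / complex_of_real (exp u))" for x
    proof (cases "0 < x \<and> x < 1")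
      case True
      have "K (u * x) u = (complex_of_real u powr (a - 1) * complex_of_real x powr (a - 1) / exp (u * x)) *
                (complex_of_real u powr (b - 1) * complex_of_real (1 - x) powr (b - 1) / exp (u - u * x))"
      proof -
        have p1: "complex_of_real (u * x) powr (a - 1) = complex_of_real u powr (a - 1) * complex_of_real x powr (a - 1)"
          using True \<open>u > 0\<close> by (simp add: powr_times_real)
        have p2: "complex_of_real (u - u * x) powr (b - 1) = complex_of_real u powr (b - 1) * complex_of_real (1 - x) powr (b - 1)"
        proof -
          have "complex_of_real (u - u * x) = complex_of_real u * complex_of_real (1 - x)"
            by (simp add: algebra_simps)
          thus ?thesis using True \<open>u > 0\<close> by (simp only:) (rule powr_times_real, auto)
        qed
        have "u * x > 0" "u - u * x > 0" using True \<open>u > 0\<close> by (auto simp: algebra_simps)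
        thus ?thesis unfolding K_def gfun_def using p1 p2 by (simp del: of_real_diff of_real_mult)
      qed
      also have "\<dots> = (complex_of_real x powr (a - 1) * complex_of_real (1 - x) powr (b - 1)) *
           (complex_of_real u powr (a - 1) * complex_of_real u powr (b - 1) / (exp (u * x) * exp (u - u * x)))"
        by (simp add: field_simps)
      also have "exp (u * x) * exp (u - u * x) = exp u" by (simp flip: exp_add)
      also have "complex_of_real u powr (a - 1) * complex_of_real u powr (b - 1) = complex_of_real u powr (a + b - 2)"
        by (simp flip: powr_add)
      finally show ?thesis using True by (simp add: bfun_def)
    next
      case False
      hence "u * x \<le> 0 \<or> u - u * x \<le> 0" using \<open>u > 0\<close>
        by (auto simp: not_less mult_le_cancel_left1 mult_nonneg_nonpos)
      hence "K (u * x) u = 0" unfolding K_def gfun_def by (auto simp: indicator_def)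
      moreover have "bfun a b x = 0" using False unfolding bfun_def by (auto simp: indicator_def)
      ultimately show ?thesis by simp
    qed
    have "(\<integral>t. K t u \<partial>lborel) = \<bar>u\<bar> *\<^sub>R (\<integral>x. K (0 + u * x) u \<partial>lborel)"
      using lborel_integral_real_affine[of u "\<lambda>t. K t u" 0] True by simp
    also have "\<dots> = complex_of_real u * (B * (complex_of_real u powr (a + b - 2) / complex_of_real (exp u)))"
      using True by (simp add: eq B_def scaleR_conv_of_real)
    also have "\<dots> = B * gfun (a + b) u"
    proof -
      have "complex_of_real u * complex_of_real u powr (a + b - 2) = complex_of_real u powr (a + b - 1)"
      proof -
        have "complex_of_real u powr (a + b - 1) = complex_of_real u powr (1 + (a + b - 2))"
          by (simp add: algebra_simps)
        also have "\<dots> = complex_of_real u * complex_of_real u powr (a + b - 2)"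
          by (simp only: powr_add powr_to_1)
        finally show ?thesis by simp
      qed
      thus ?thesis using True by (simp add: gfun_def)
    qed
    finally show ?thesis .
  qed
  have "Gamma a * Gamma b = B * Gamma (a + b)"
    using step1 step2 step3 gab by simp
  moreover have "Gamma (a + b) \<noteq> 0"
  proof
    assume "Gamma (a + b) = 0"
    then obtain n :: int where "a + b = of_int n" "n \<le> 0" by (auto simp: Gamma_eq_zero_iff elim!: nonpos_Ints_cases)
    hence "Re (a + b) = of_int n" by simp
    thus False using a b \<open>n \<le> 0\<close> by simp
  qed
  ultimately have "B = Beta a b" by (simp add: Beta_def field_simps)
  thus ?thesis by (simp add: B_def)
qed

lemma Gamma_rGamma_poch:
  assumes "Re z > 0"
  shows "Gamma (z + of_nat n) * rGamma z = pochhammer z n"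
proof -
  have nz: "Gamma (z + of_nat n) \<noteq> 0"
  proof
    assume "Gamma (z + of_nat n) = 0"
    then obtain j :: int where "z + of_nat n = of_int j" "j \<le> 0" by (auto simp: Gamma_eq_zero_iff elim!: nonpos_Ints_cases)
    hence "Re (z + of_nat n) = of_int j" by simp
    thus False using assms \<open>j \<le> 0\<close> by simp
  qed
  have "rGamma z = pochhammer z n * rGamma (z + of_nat n)" by (rule pochhammer_rGamma)
  thus ?thesis using nz by (simp add: rGamma_inverse_Gamma field_simps)
qed

lemma phi2_eq:
  assumes w: "-1 < Re w" "Re w < 1"
  shows "phi2 w (-w) u * complex_of_real (u ^ k * (1 - u) ^ m) =
         (rGamma (w + 1) * rGamma (1 - w)) * bfun (of_nat k + 1 + w) (of_nat m + 1 - w) u"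
proof (cases "0 < u \<and> u < 1")
  case True
  have i: "indicator {0<..<1} u = (1::real)" using True by simp
  have x1: "of_nat k + 1 + w - 1 = of_nat k + w" by simp
  have x2: "of_nat m + 1 - w - 1 = of_nat m + (-w)" by simp
  have nz: "complex_of_real u \<noteq> 0" "complex_of_real (1 - u) \<noteq> 0" using True by auto
  have p1: "complex_of_real u powr (of_nat k) = complex_of_real u ^ k" using nz by (simp add: powr_nat')
  have p2: "complex_of_real (1 - u) powr (of_nat m) = complex_of_real (1 - u) ^ m" using nz by (simp add: powr_nat')
  show ?thesis unfolding phi2_def phi_def bfun_def i x1 x2 powr_add p1 p2 using True
    by (simp del: of_real_diff)
next
  case False
  thus ?thesis unfolding phi2_def phi_def bfun_def by (auto simp: indicator_def)
qed

lemma moment1: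
  assumes w: "-1 < Re w" "Re w < 1"
  shows "integrable lborel (\<lambda>u. phi2 w (-w) u * complex_of_real (u ^ k * (1 - u) ^ m))"
    and "(LINT u|lborel. phi2 w (-w) u * complex_of_real (u ^ k * (1 - u) ^ m)) =
           pochhammer (1 + w) k * pochhammer (1 - w) m / fact (k + m + 1)"
proof -
  have a: "Re (of_nat k + 1 + w) > 0" and b: "Re (of_nat m + 1 - w) > 0" using w by auto
  show "integrable lborel (\<lambda>u. phi2 w (-w) u * complex_of_real (u ^ k * (1 - u) ^ m))"
    unfolding phi2_eq[OF w] using bfun_integrable[OF a b] by simp
  have "(LINT u|lborel. phi2 w (-w) u * complex_of_real (u ^ k * (1 - u) ^ m)) =
        (rGamma (w + 1) * rGamma (1 - w)) * Beta (of_nat k + 1 + w) (of_nat m + 1 - w)"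
    unfolding phi2_eq[OF w] using complex_Beta[OF a b] by simp
  also have "\<dots> = (Gamma (1 + w + of_nat k) * rGamma (1 + w)) * (Gamma (1 - w + of_nat m) * rGamma (1 - w))
                   / Gamma (1 + of_nat (k + m + 1))"
    by (simp add: Beta_def algebra_simps)
  also have "\<dots> = pochhammer (1 + w) k * pochhammer (1 - w) m / fact (k + m + 1)"
  proof -
    have "Gamma (1 + w + of_nat k) * rGamma (1 + w) = pochhammer (1 + w) k"
      using w by (intro Gamma_rGamma_poch) simp
    moreover have "Gamma (1 - w + of_nat m) * rGamma (1 - w) = pochhammer (1 - w) m"
      using w by (intro Gamma_rGamma_poch) simp
    moreover have "Gamma (1 + of_nat (k + m + 1) :: complex) = fact (k + m + 1)" by (rule Gamma_fact)
    ultimately show ?thesis by simp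
  qed
  finally show "(LINT u|lborel. phi2 w (-w) u * complex_of_real (u ^ k * (1 - u) ^ m)) =
           pochhammer (1 + w) k * pochhammer (1 - w) m / fact (k + m + 1)" .
qed

lemma phi2m_shift: "phi2_minus (-w) w (-1 + x) * complex_of_real ((1 + (-1 + x)) ^ k * (- (-1 + x)) ^ m)
   = phi2 w (-w) x * complex_of_real (x ^ k * (1 - x) ^ m)"
  unfolding phi2_minus_def phi2_def by (simp add: algebra_simps)

lemma moment2:
  assumes w: "-1 < Re w" "Re w < 1"
  shows "integrable lborel (\<lambda>v. phi2_minus (-w) w v * complex_of_real ((1 + v) ^ k * (- v) ^ m))"
    and "(LINT v|lborel. phi2_minus (-w) w v * complex_of_real ((1 + v) ^ k * (- v) ^ m)) =
           pochhammer (1 + w) k * pochhammer (1 - w) m / fact (k + m + 1)"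
proof -
  let ?f = "\<lambda>v. phi2_minus (-w) w v * complex_of_real ((1 + v) ^ k * (- v) ^ m)"
  have "integrable lborel (\<lambda>x. ?f (-1 + 1 * x))"
    unfolding mult_1 phi2m_shift using moment1(1)[OF w] .
  thus "integrable lborel ?f"
    using lborel_integrable_real_affine_iff[of 1 ?f "-1"] by simp
  have "integral\<^sup>L lborel ?f = \<bar>1\<bar> *\<^sub>R integral\<^sup>L lborel (\<lambda>x. ?f (-1 + 1 * x))"
    by (rule lborel_integral_real_affine) simp
  also have "\<dots> = (LINT u|lborel. phi2 w (-w) u * complex_of_real (u ^ k * (1 - u) ^ m))"
    unfolding mult_1 phi2m_shift by simp
  finally show "integral\<^sup>L lborel ?f = pochhammer (1 + w) k * pochhammer (1 - w) m / fact (k + m + 1)"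
    using moment1(2)[OF w] by simp
qed

lemma phi_measurable [measurable]: "phi a \<in> borel_measurable borel"
  unfolding phi_def by measurable

lemma phi2_measurable [measurable]: "phi2 a b \<in> borel_measurable borel"
  unfolding phi2_def by measurable

lemma phi2_minus_measurable [measurable]: "phi2_minus a b \<in> borel_measurable borel"
  unfolding phi2_minus_def by measurable

lemma phi2_supp: "phi2 a b u \<noteq> 0 \<Longrightarrow> 0 < u \<and> u < 1"
  unfolding phi2_def phi_def by (auto split: if_splits)

lemma phi2_minus_supp: "phi2_minus a b v \<noteq> 0 \<Longrightarrow> -1 < v \<and> v < 0"
  unfolding phi2_minus_def using phi2_supp[of a b "-v"] by auto

lemma shift_integral: "integral\<^sup>L lborel (\<lambda>u. f (u - t)) = integral\<^sup>L lborel (f :: real \<Rightarrow> 'a::{banach,second_countable_topology})"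
  using lborel_integral_real_affine[of 1 f "-t"] by simp

lemma shift_integral': "integral\<^sup>L lborel (\<lambda>u. f (t + u)) = integral\<^sup>L lborel (f :: real \<Rightarrow> 'a::{banach,second_countable_topology})"
  using lborel_integral_real_affine[of 1 f "t"] by simp

lemma shift_integrable: "integrable lborel f \<Longrightarrow> integrable lborel (\<lambda>u. f (u - t :: real) :: 'a::{banach,second_countable_topology})"
  using lborel_integrable_real_affine[of f 1 "-t"] by simp

locale convsetup =
  fixes F G :: "real \<Rightarrow> complex"
  assumes Fm[measurable]: "F \<in> borel_measurable borel"
    and Gm[measurable]: "G \<in> borel_measurable borel"
    and Fi: "integrable lborel F" and Gi: "integrable lborel G"
    and Fs: "\<And>u. F u \<noteq> 0 \<Longrightarrow> 0 < u \<and> u < 1"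
    and Gs: "\<And>v. G v \<noteq> 0 \<Longrightarrow> -1 < v \<and> v < 0"
begin

lemma pair_int: "integrable (lborel \<Otimes>\<^sub>M lborel) (\<lambda>(u, x). F u * G (x - u))"
proof (rule lborel_pair.Fubini_integrable)
  have "(\<integral>x. norm (F u * G (x - u)) \<partial>lborel) = norm (F u) * (\<integral>x. norm (G x) \<partial>lborel)" for u
    unfolding norm_mult using shift_integral[of "\<lambda>x. norm (G x)" u] by simp
  thus "integrable lborel (\<lambda>u. \<integral>x. norm (case (u, x) of (u, x) \<Rightarrow> F u * G (x - u)) \<partial>lborel)"
    using Fi by simp
  show "AE u in lborel. integrable lborel (\<lambda>x. case (u, x) of (u, x) \<Rightarrow> F u * G (x - u))"
    using shift_integrable[OF Gi] by simp
qed simp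

lemma pair_int_l: "integrable (lborel \<Otimes>\<^sub>M lborel) (\<lambda>(u, x). complex_of_real (x ^ l) * (F u * G (x - u)))"
proof (rule Bochner_Integration.integrable_bound[OF pair_int])
  show "AE p in lborel \<Otimes>\<^sub>M lborel. norm (case p of (u, x) \<Rightarrow> complex_of_real (x ^ l) * (F u * G (x - u)))
          \<le> norm (case p of (u, x) \<Rightarrow> F u * G (x - u))"
  proof (intro AE_I2, clarify)
    fix u x :: real
    show "norm (complex_of_real (x ^ l) * (F u * G (x - u))) \<le> norm (F u * G (x - u))"
    proof (cases "F u * G (x - u) = 0")
      case False
      hence "F u \<noteq> 0" "G (x - u) \<noteq> 0" by auto
      hence "0 < u \<and> u < 1" "-1 < x - u \<and> x - u < 0" using Fs Gs by blast+
      hence "\<bar>x\<bar> \<le> 1" by auto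
      hence "\<bar>x\<bar> ^ l \<le> 1" by (simp add: power_le_one)
      have n: "norm (complex_of_real (x ^ l)) \<le> 1" using \<open>\<bar>x\<bar> ^ l \<le> 1\<close> by (simp only: norm_of_real power_abs)
      show ?thesis unfolding norm_mult[of "complex_of_real (x ^ l)"]
        by (rule mult_left_le_one_le[OF _ _ n]) simp_all
    qed auto
  qed
qed simp

lemma conv_integrable: "integrable lborel (conv F G)"
proof -
  have "integrable lborel (\<lambda>x. \<integral>u. F u * G (x - u) \<partial>lborel)"
    using lborel_pair.integrable_snd[of "\<lambda>u x. F u * G (x - u)"] pair_int by simp
  thus ?thesis unfolding conv_def[abs_def] .
qed

lemma conv_supp: "conv F G x \<noteq> 0 \<Longrightarrow> -1 < x \<and> x < 1"
proof (rule ccontr)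
  assume "conv F G x \<noteq> 0" "\<not> (-1 < x \<and> x < 1)"
  have "F u * G (x - u) = 0" for u
  proof (rule ccontr)
    assume "F u * G (x - u) \<noteq> 0"
    hence "F u \<noteq> 0" "G (x - u) \<noteq> 0" by auto
    hence "0 < u \<and> u < 1" "-1 < x - u \<and> x - u < 0" using Fs Gs by blast+
    thus False using \<open>\<not> (-1 < x \<and> x < 1)\<close> by auto
  qed
  hence "(\<lambda>u. F u * G (x - u)) = (\<lambda>u. 0)" by auto
  hence "conv F G x = 0" unfolding conv_def by simp
  thus False using \<open>conv F G x \<noteq> 0\<close> by simp
qed

lemma conv_moment:
  "(LINT x|lborel. complex_of_real (x ^ l) * conv F G x) =
   (LINT u|lborel. F u * (LINT v|lborel. complex_of_real ((u + v) ^ l) * G v))"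
proof -
  have "(LINT x|lborel. complex_of_real (x ^ l) * conv F G x) =
        (LINT x|lborel. LINT u|lborel. complex_of_real (x ^ l) * (F u * G (x - u)))"
    unfolding conv_def by simp
  also have "\<dots> = (LINT u|lborel. LINT x|lborel. complex_of_real (x ^ l) * (F u * G (x - u)))"
    using lborel_pair.Fubini_integral[of "\<lambda>u x. complex_of_real (x ^ l) * (F u * G (x - u))"] pair_int_l
    by simp
  also have "\<dots> = (LINT u|lborel. F u * (LINT v|lborel. complex_of_real ((u + v) ^ l) * G v))"
  proof (rule Bochner_Integration.integral_cong[OF refl])
    fix u
    have "(LINT x|lborel. complex_of_real (x ^ l) * (F u * G (x - u))) =
          F u * (LINT x|lborel. complex_of_real (x ^ l) * G (x - u))"
      by (simp add: algebra_simps)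
    also have "(LINT x|lborel. complex_of_real (x ^ l) * G (x - u)) =
               (LINT v|lborel. complex_of_real ((u + v) ^ l) * G v)"
      using shift_integral'[of "\<lambda>x. complex_of_real (x ^ l) * G (x - u)" u] by simp
    finally show "(LINT x|lborel. complex_of_real (x ^ l) * (F u * G (x - u))) =
          F u * (LINT v|lborel. complex_of_real ((u + v) ^ l) * G v)" .
  qed
  finally show ?thesis .
qed

end

lemma phi2_integrable:
  assumes z: "-1 < Re z" "Re z < 1"
  shows "integrable lborel (phi2 z (- z))"
proof -
  have "integrable lborel (\<lambda>u. phi2 z (-z) u * complex_of_real (u ^ 0 * (1 - u) ^ 0))" by (rule moment1(1)[OF z])
  thus ?thesis by (simp only: power_0 mult_1 of_real_1 mult_1_right)
qed
lemma phi2_minus_integrable: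
  assumes z: "-1 < Re z" "Re z < 1"
  shows "integrable lborel (phi2_minus (- z) z)"
proof -
  have "integrable lborel (\<lambda>u. phi2_minus (- z) z u * complex_of_real ((1 + u) ^ 0 * (- u) ^ 0))" by (rule moment2(1)[OF z])
  thus ?thesis by (simp only: power_0 mult_1 of_real_1 mult_1_right)
qed

lemma final_alg:
  fixes s a1 a2 b1 b2 :: complex
  assumes p: "p \<le> l"
  shows "of_nat (l choose p) * s * (b1 * b2 / fact (l + 1)) * (a1 * a2 / fact (l + 1)) =
         s * 1 * a1 * a2 * b1 * b2 / (fact (l + 1) * of_nat (l + 1) * fact p * fact (l - p))"
proof -
  have bin: "(of_nat (l choose p) :: complex) = fact l / (fact p * fact (l - p))"
    using binomial_fact[OF p] by simp
  have f: "(fact (l + 1) :: complex) = of_nat (l + 1) * fact l" by simp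
  have nz: "(fact p :: complex) \<noteq> 0" "(fact (l - p) :: complex) \<noteq> 0" "(fact l :: complex) \<noteq> 0" "(of_nat (l + 1) :: complex) \<noteq> 0"
    by (simp_all del: of_nat_Suc)
  show ?thesis unfolding bin f using nz by (simp add: field_simps del: of_nat_Suc)
qed

lemma binom_split: "(u + v :: real) ^ l =
   (\<Sum>p\<le>l. real (l choose p) * (u ^ p * (- (1 - u)) ^ (l - p)) * ((1 + v) ^ p * (- v) ^ (l - p)))"
proof -
  have "u + v = u * (1 + v) + (- (1 - u)) * (- v)" by (simp add: algebra_simps)
  hence "(u + v) ^ l = (u * (1 + v) + (- (1 - u)) * (- v)) ^ l" by simp
  also have "\<dots> = (\<Sum>p\<le>l. real (l choose p) * (u * (1 + v)) ^ p * ((- (1 - u)) * (- v)) ^ (l - p))"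
    by (rule binomial_ring)
  also have "\<dots> = (\<Sum>p\<le>l. real (l choose p) * (u ^ p * (- (1 - u)) ^ (l - p)) * ((1 + v) ^ p * (- v) ^ (l - p)))"
    by (intro sum.cong refl) (simp only: power_mult_distrib mult.assoc mult.commute mult.left_commute)
  finally show ?thesis .
qed

lemma conv_moment_value:
  fixes z z' :: complex
  assumes z: "-1 < Re z" "Re z < 1" and z': "-1 < Re z'" "Re z' < 1" and t1: "z * z' = 1"
  shows "(LINT x|lborel. complex_of_real (x ^ l) * conv (phi2 z (- z)) (phi2_minus (- z') z') x) =
         sigma1_moment z z' l"
proof -
  define F where "F = phi2 z (- z)"
  define G where "G = phi2_minus (- z') z'"
  have cs: "convsetup F G"
  proof (rule convsetup.intro)
    show "F \<in> borel_measurable borel" unfolding F_def by (rule phi2_measurable)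
    show "G \<in> borel_measurable borel" unfolding G_def by (rule phi2_minus_measurable)
    show "integrable lborel F" unfolding F_def by (rule phi2_integrable[OF z])
    show "integrable lborel G" unfolding G_def by (rule phi2_minus_integrable[OF z'])
    show "F u \<noteq> 0 \<Longrightarrow> 0 < u \<and> u < 1" for u unfolding F_def by (rule phi2_supp)
    show "G v \<noteq> 0 \<Longrightarrow> -1 < v \<and> v < 0" for v unfolding G_def by (rule phi2_minus_supp)
  qed
  define A where "A = (\<lambda>p. pochhammer (z + 1) p * pochhammer (- z + 1) (l - p) / fact (l + 1))"
  define B where "B = (\<lambda>p. pochhammer (z' + 1) p * pochhammer (- z' + 1) (l - p) / fact (l + 1))"
  define c where "c = (\<lambda>p u. complex_of_real (real (l choose p) * (u ^ p * (- (1 - u)) ^ (l - p))))"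
  have inner: "(LINT v|lborel. complex_of_real ((u + v) ^ l) * G v) = (\<Sum>p\<le>l. c p u * B p)" for u
  proof -
    have e: "complex_of_real ((u + v) ^ l) * G v =
          (\<Sum>p\<le>l. c p u * (G v * complex_of_real ((1 + v) ^ p * (- v) ^ (l - p))))" for v
      unfolding binom_split[of u v l] c_def of_real_sum sum_distrib_right
      by (intro sum.cong refl) (simp only: of_real_mult mult.assoc mult.commute mult.left_commute)
    have "(LINT v|lborel. complex_of_real ((u + v) ^ l) * G v) =
          (LINT v|lborel. (\<Sum>p\<le>l. c p u * (G v * complex_of_real ((1 + v) ^ p * (- v) ^ (l - p)))))"
      unfolding e ..
    also have "\<dots> = (\<Sum>p\<le>l. (LINT v|lborel. c p u * (G v * complex_of_real ((1 + v) ^ p * (- v) ^ (l - p)))))"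
      by (rule Bochner_Integration.integral_sum, rule integrable_mult_right, unfold G_def, rule moment2(1)[OF z'])
    also have "\<dots> = (\<Sum>p\<le>l. c p u * B p)"
    proof (intro sum.cong refl)
      fix p assume "p \<in> {..l}"
      hence pl: "p + (l - p) + 1 = l + 1" by simp
      have m2: "(LINT v|lborel. G v * complex_of_real ((1 + v) ^ p * (- v) ^ (l - p))) = B p"
      proof -
        have e1: "1 + z' = z' + 1" "1 - z' = - z' + 1" by simp_all
        show ?thesis using moment2(2)[OF z', of p "l - p"] unfolding B_def G_def pl e1 .
      qed
      show "(LINT v|lborel. c p u * (G v * complex_of_real ((1 + v) ^ p * (- v) ^ (l - p)))) = c p u * B p"
        by (simp only: integral_mult_right_zero m2)
    qed
    finally show ?thesis .
  qed
  have e2: "F u * (\<Sum>p\<le>l. c p u * B p) = (\<Sum>p\<le>l. (of_nat (l choose p) * (-1) ^ (l - p) * B p) *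
                       (F u * complex_of_real (u ^ p * (1 - u) ^ (l - p))))" for u
    unfolding c_def sum_distrib_left
  proof (intro sum.cong refl)
    fix p
    have "(- (1 - u)) ^ (l - p) = (-1) ^ (l - p) * (1 - u) ^ (l - p)" by (rule power_minus)
    hence r: "real (l choose p) * (u ^ p * (- (1 - u)) ^ (l - p)) =
              real (l choose p) * (-1) ^ (l - p) * (u ^ p * (1 - u) ^ (l - p))" by simp
    show "F u * (complex_of_real (real (l choose p) * (u ^ p * (- (1 - u)) ^ (l - p))) * B p) =
         of_nat (l choose p) * (- 1) ^ (l - p) * B p * (F u * complex_of_real (u ^ p * (1 - u) ^ (l - p)))"
      unfolding r
      by (simp only: of_real_mult of_real_power of_real_of_nat_eq of_real_minus of_real_1) (simp only: mult.assoc mult.commute mult.left_commute)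
  qed
  have "(LINT x|lborel. complex_of_real (x ^ l) * conv F G x) =
        (LINT u|lborel. F u * (\<Sum>p\<le>l. c p u * B p))"
    unfolding convsetup.conv_moment[OF cs] inner ..
  also have "\<dots> = (LINT u|lborel. (\<Sum>p\<le>l. (of_nat (l choose p) * (-1) ^ (l - p) * B p) *
                       (F u * complex_of_real (u ^ p * (1 - u) ^ (l - p)))))"
    unfolding e2 ..
  also have "\<dots> = (\<Sum>p\<le>l. (LINT u|lborel. (of_nat (l choose p) * (-1) ^ (l - p) * B p) *
                       (F u * complex_of_real (u ^ p * (1 - u) ^ (l - p)))))"
    by (rule Bochner_Integration.integral_sum, rule integrable_mult_right, unfold F_def, rule moment1(1)[OF z])
  also have "\<dots> = (\<Sum>p\<le>l. of_nat (l choose p) * (-1) ^ (l - p) * B p * A p)"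
  proof (intro sum.cong refl)
    fix p assume "p \<in> {..l}"
    hence pl: "p + (l - p) + 1 = l + 1" by simp
    show "(LINT u|lborel. (of_nat (l choose p) * (-1) ^ (l - p) * B p) *
                       (F u * complex_of_real (u ^ p * (1 - u) ^ (l - p)))) = of_nat (l choose p) * (-1) ^ (l - p) * B p * A p"
    proof -
      have m1: "(LINT u|lborel. F u * complex_of_real (u ^ p * (1 - u) ^ (l - p))) = A p"
      proof -
        have e1: "1 + z = z + 1" "1 - z = - z + 1" by simp_all
        show ?thesis using moment1(2)[OF z, of p "l - p"] unfolding A_def F_def pl e1 .
      qed
      show ?thesis by (simp only: integral_mult_right_zero m1 mult.assoc)
    qed
  qed
  also have "\<dots> = sigma1_moment z z' l"
    unfolding sigma1_moment_def Let_def t1 atLeast0AtMost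
  proof (intro sum.cong refl)
    fix p assume "p \<in> {..l}"
    hence p: "p \<le> l" by simp
    have pl: "p + (l - p) + 1 = l + 1" using p by simp
    have pf: "pochhammer (1::complex) (l + 1) = fact (l + 1)" by (rule pochhammer_fact[symmetric])
    show "of_nat (l choose p) * (-1) ^ (l - p) * B p * A p =
      (-1) ^ (l - p) * 1 * pochhammer (z + 1) p * pochhammer (- z + 1) (l - p) * pochhammer (z' + 1) p *
      pochhammer (- z' + 1) (l - p) / (pochhammer 1 (p + (l - p) + 1) * of_nat (p + (l - p) + 1) * fact p * fact (l - p))"
      unfolding A_def B_def pl pf by (rule final_alg[OF p])
  qed
  finally show ?thesis unfolding F_def G_def .
qed

lemma moment_unique:
  fixes \<mu> :: "real measure" and h \<psi> :: "real \<Rightarrow> complex"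
  assumes sets_mu: "sets \<mu> = sets borel" and fin: "finite_measure \<mu>"
    and supp: "emeasure \<mu> (- {-1..1}) = 0"
    and hi: "integrable lborel h" and hs: "\<And>x. h x \<noteq> 0 \<Longrightarrow> -1 < x \<and> x < 1"
    and mom: "\<And>l. complex_of_real (integral\<^sup>L \<mu> (\<lambda>x. x ^ l)) = (LINT x|lborel. complex_of_real (x ^ l) * h x)"
    and cont: "continuous_on UNIV \<psi>"
  shows "integrable lborel (\<lambda>x. \<psi> x * h x) \<and> integral\<^sup>L \<mu> \<psi> = (LINT x|lborel. \<psi> x * h x)"
proof -
  interpret finite_measure \<mu> by (rule fin)
  have AEmu: "AE x in \<mu>. x \<in> {-1..1}"
    by (rule AE_I[of _ _ "-{-1..1}"]) (auto simp: supp sets_mu)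
  have hm[measurable]: "h \<in> borel_measurable borel"
    using borel_measurable_integrable[OF hi] by simp
  have meas_mu: "f \<in> borel_measurable \<mu>" if "f \<in> borel_measurable borel" for f :: "real \<Rightarrow> complex"
    by (subst measurable_cong_sets[OF sets_mu refl]) (rule that)
  have meas_mu_r: "f \<in> borel_measurable \<mu>" if "f \<in> borel_measurable borel" for f :: "real \<Rightarrow> real"
    by (subst measurable_cong_sets[OF sets_mu refl]) (rule that)
  have intmu: "integrable \<mu> f" if "f \<in> borel_measurable borel" "\<And>x. x \<in> {-1..1} \<Longrightarrow> norm (f x) \<le> C"
    for f :: "real \<Rightarrow> complex" and C
  proof (rule integrable_const_bound[of _ C])
    show "AE x in \<mu>. norm (f x) \<le> C" using AEmu by eventually_elim (rule that(2))
    show "f \<in> borel_measurable \<mu>" by (rule meas_mu[OF that(1)])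
  qed
  have intmu_r: "integrable \<mu> f" if "f \<in> borel_measurable borel" "\<And>x. x \<in> {-1..1} \<Longrightarrow> norm (f x) \<le> C"
    for f :: "real \<Rightarrow> real" and C
  proof (rule integrable_const_bound[of _ C])
    show "AE x in \<mu>. norm (f x) \<le> C" using AEmu by eventually_elim (rule that(2))
    show "f \<in> borel_measurable \<mu>" by (rule meas_mu_r[OF that(1)])
  qed
  have inth: "integrable lborel (\<lambda>x. f x * h x)"
    if fm: "f \<in> borel_measurable borel" and fb: "\<And>x. x \<in> {-1..1} \<Longrightarrow> norm (f x) \<le> C" for f :: "real \<Rightarrow> complex" and C
  proof (rule Bochner_Integration.integrable_bound[of lborel "\<lambda>x. complex_of_real C * h x"])
    show "integrable lborel (\<lambda>x. complex_of_real C * h x)" using hi by simp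
    show "(\<lambda>x. f x * h x) \<in> borel_measurable lborel" using fm by simp
    show "AE x in lborel. norm (f x * h x) \<le> norm (complex_of_real C * h x)"
    proof (intro AE_I2)
      fix x
      show "norm (f x * h x) \<le> norm (complex_of_real C * h x)"
      proof (cases "h x = 0")
        case False
        hence "x \<in> {-1..1}" using hs by force
        hence "norm (f x) \<le> \<bar>C\<bar>" using fb by force
        thus ?thesis by (simp add: norm_mult mult_right_mono)
      qed simp
    qed
  qed
  have polyeq: "integral\<^sup>L \<mu> (\<lambda>x. \<Sum>i\<le>n. complex_of_real (a i * x ^ i)) =
                (LINT x|lborel. (\<Sum>i\<le>n. complex_of_real (a i * x ^ i)) * h x)" for a :: "nat \<Rightarrow> real" and n
  proof -
    have b1: "norm (complex_of_real (a i * x ^ i)) \<le> \<bar>a i\<bar>" if "x \<in> {-1..1}" for i x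
    proof -
      have "\<bar>x\<bar> ^ i \<le> 1" using that by (intro power_le_one) auto
      thus ?thesis by (simp only: norm_of_real abs_mult power_abs) (rule mult_left_le, simp_all)
    qed
    have "integral\<^sup>L \<mu> (\<lambda>x. \<Sum>i\<le>n. complex_of_real (a i * x ^ i)) =
          (\<Sum>i\<le>n. integral\<^sup>L \<mu> (\<lambda>x. complex_of_real (a i * x ^ i)))"
      by (rule Bochner_Integration.integral_sum) (rule intmu[OF _ b1], simp_all)
    also have "\<dots> = (\<Sum>i\<le>n. complex_of_real (a i) * complex_of_real (integral\<^sup>L \<mu> (\<lambda>x. x ^ i)))"
      by (simp del: of_real_mult add: of_real_mult[symmetric])
    also have "\<dots> = (\<Sum>i\<le>n. complex_of_real (a i) * (LINT x|lborel. complex_of_real (x ^ i) * h x))"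
      by (simp add: mom)
    also have "\<dots> = (\<Sum>i\<le>n. (LINT x|lborel. complex_of_real (a i * x ^ i) * h x))"
      by (intro sum.cong refl) (simp add: mult.assoc)
    also have "\<dots> = (LINT x|lborel. (\<Sum>i\<le>n. complex_of_real (a i * x ^ i) * h x))"
      by (rule Bochner_Integration.integral_sum[symmetric]) (rule inth[OF _ b1], simp_all)
    also have "\<dots> = (LINT x|lborel. (\<Sum>i\<le>n. complex_of_real (a i * x ^ i)) * h x)"
      by (simp add: sum_distrib_right)
    finally show ?thesis .
  qed
  have \<psi>m[measurable]: "\<psi> \<in> borel_measurable borel" using cont by (rule borel_measurable_continuous_onI)
  obtain B\<psi> where B\<psi>: "\<And>x. x \<in> {-1..1} \<Longrightarrow> norm (\<psi> x) \<le> B\<psi>"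
  proof -
    have "compact (\<psi> ` {-1..1})"
      by (rule compact_continuous_image) (use cont in \<open>auto intro: continuous_on_subset\<close>)
    then obtain B where "\<forall>y\<in>\<psi> ` {-1..1}. norm y \<le> B" using compact_imp_bounded bounded_iff by metis
    hence "\<And>x. x \<in> {-1..1} \<Longrightarrow> norm (\<psi> x) \<le> B" by auto
    thus ?thesis by (rule that)
  qed
  define M where "M = measure \<mu> (space \<mu>)"
  define H where "H = (LINT x|lborel. norm (h x))"
  have M0: "M \<ge> 0" and H0: "H \<ge> 0" unfolding M_def H_def by auto
  have "norm (integral\<^sup>L \<mu> \<psi> - (LINT x|lborel. \<psi> x * h x)) \<le> 0 + e" if e: "e > 0" for e
  proof -
    define K where "K = M + H + 1"
    have K0: "K > 0" using M0 H0 by (simp add: K_def)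
    define \<epsilon> where "\<epsilon> = e / (2 * K)"
    have \<epsilon>0: "\<epsilon> > 0" using e K0 by (simp add: \<epsilon>_def)
    have c1: "continuous_on {-1..1} (\<lambda>x. Re (\<psi> x))" "continuous_on {-1..1} (\<lambda>x. Im (\<psi> x))"
      using cont by (auto intro!: continuous_intros intro: continuous_on_subset)
    obtain g1 where g1: "real_polynomial_function g1" "\<And>x. x \<in> {-1..1} \<Longrightarrow> \<bar>Re (\<psi> x) - g1 x\<bar> < \<epsilon>"
      using Stone_Weierstrass_real_polynomial_function[OF compact_Icc c1(1) \<epsilon>0] by blast
    obtain g2 where g2: "real_polynomial_function g2" "\<And>x. x \<in> {-1..1} \<Longrightarrow> \<bar>Im (\<psi> x) - g2 x\<bar> < \<epsilon>"
      using Stone_Weierstrass_real_polynomial_function[OF compact_Icc c1(2) \<epsilon>0] by blast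
    obtain a1 n1 where a1: "g1 = (\<lambda>x. \<Sum>i\<le>n1. a1 i * x ^ i)" using real_polynomial_function_imp_sum[OF g1(1)] by blast
    obtain a2 n2 where a2: "g2 = (\<lambda>x. \<Sum>i\<le>n2. a2 i * x ^ i)" using real_polynomial_function_imp_sum[OF g2(1)] by blast
    define Q1 where "Q1 = (\<lambda>x. \<Sum>i\<le>n1. complex_of_real (a1 i * x ^ i))"
    define Q2 where "Q2 = (\<lambda>x. \<Sum>i\<le>n2. complex_of_real (a2 i * x ^ i))"
    have Q1g: "Q1 x = complex_of_real (g1 x)" for x unfolding Q1_def a1 by simp
    have Q2g: "Q2 x = complex_of_real (g2 x)" for x unfolding Q2_def a2 by simp
    define P where "P = (\<lambda>x. Q1 x + \<i> * Q2 x)"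
    have Q1m[measurable]: "Q1 \<in> borel_measurable borel" unfolding Q1_def by measurable
    have Q2m[measurable]: "Q2 \<in> borel_measurable borel" unfolding Q2_def by measurable
    have Pm[measurable]: "P \<in> borel_measurable borel" unfolding P_def by measurable
    have close: "norm (\<psi> x - P x) \<le> 2 * \<epsilon>" if "x \<in> {-1..1}" for x
    proof -
      have "Re (\<psi> x - P x) = Re (\<psi> x) - g1 x" "Im (\<psi> x - P x) = Im (\<psi> x) - g2 x"
        unfolding P_def Q1g Q2g by simp_all
      hence "norm (\<psi> x - P x) \<le> \<bar>Re (\<psi> x) - g1 x\<bar> + \<bar>Im (\<psi> x) - g2 x\<bar>"
        using cmod_le[of "\<psi> x - P x"] by simp
      thus ?thesis using g1(2)[OF that] g2(2)[OF that] by simp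
    qed
    have dB: "norm (\<psi> x - P x) \<le> 2 * \<epsilon>" if "x \<in> {-1..1}" for x using close[OF that] .
    have PB: "norm (P x) \<le> B\<psi> + 2 * \<epsilon>" if "x \<in> {-1..1}" for x
      using B\<psi>[OF that] close[OF that] norm_triangle_ineq2[of "P x" "\<psi> x"] by (simp add: norm_minus_commute)
    have Q1B: "norm (Q1 x) \<le> (\<Sum>i\<le>n1. \<bar>a1 i\<bar>)" if "x \<in> {-1..1}" for x
    proof -
      have "norm (Q1 x) \<le> (\<Sum>i\<le>n1. norm (complex_of_real (a1 i * x ^ i)))" unfolding Q1_def by (rule norm_sum)
      also have "\<dots> \<le> (\<Sum>i\<le>n1. \<bar>a1 i\<bar>)"
      proof (intro sum_mono)
        fix i
        have "\<bar>x\<bar> ^ i \<le> 1" using that by (intro power_le_one) auto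
        thus "norm (complex_of_real (a1 i * x ^ i)) \<le> \<bar>a1 i\<bar>" by (simp only: norm_of_real abs_mult power_abs) (rule mult_left_le, simp_all)
      qed
      finally show ?thesis .
    qed
    have Q2B: "norm (Q2 x) \<le> (\<Sum>i\<le>n2. \<bar>a2 i\<bar>)" if "x \<in> {-1..1}" for x
    proof -
      have "norm (Q2 x) \<le> (\<Sum>i\<le>n2. norm (complex_of_real (a2 i * x ^ i)))" unfolding Q2_def by (rule norm_sum)
      also have "\<dots> \<le> (\<Sum>i\<le>n2. \<bar>a2 i\<bar>)"
      proof (intro sum_mono)
        fix i
        have "\<bar>x\<bar> ^ i \<le> 1" using that by (intro power_le_one) auto
        thus "norm (complex_of_real (a2 i * x ^ i)) \<le> \<bar>a2 i\<bar>" by (simp only: norm_of_real abs_mult power_abs) (rule mult_left_le, simp_all)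
      qed
      finally show ?thesis .
    qed
    have iQ1: "integrable \<mu> Q1" by (rule intmu[OF _ Q1B]) simp
    have iQ2: "integrable \<mu> Q2" by (rule intmu[OF _ Q2B]) simp
    have iQ1h: "integrable lborel (\<lambda>x. Q1 x * h x)" by (rule inth[OF _ Q1B]) simp
    have iQ2h: "integrable lborel (\<lambda>x. Q2 x * h x)" by (rule inth[OF _ Q2B]) simp
    have Peq: "integral\<^sup>L \<mu> P = (LINT x|lborel. P x * h x)"
    proof -
      have "integral\<^sup>L \<mu> P = integral\<^sup>L \<mu> Q1 + \<i> * integral\<^sup>L \<mu> Q2"
        unfolding P_def using iQ1 iQ2 by simp
      also have "integral\<^sup>L \<mu> Q1 = (LINT x|lborel. Q1 x * h x)" unfolding Q1_def by (rule polyeq)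
      also have "integral\<^sup>L \<mu> Q2 = (LINT x|lborel. Q2 x * h x)" unfolding Q2_def by (rule polyeq)
      also have "(LINT x|lborel. Q1 x * h x) + \<i> * (LINT x|lborel. Q2 x * h x) = (LINT x|lborel. P x * h x)"
        unfolding P_def distrib_right using iQ1h iQ2h by (simp add: mult.assoc)
      finally show ?thesis .
    qed
    have i\<psi>: "integrable \<mu> \<psi>" by (rule intmu[OF _ B\<psi>]) simp
    have iP: "integrable \<mu> P" by (rule intmu[OF _ PB]) simp
    have i\<psi>h: "integrable lborel (\<lambda>x. \<psi> x * h x)" by (rule inth[OF _ B\<psi>]) simp
    have iPh: "integrable lborel (\<lambda>x. P x * h x)" by (rule inth[OF _ PB]) simp
    have idh: "integrable lborel (\<lambda>x. (\<psi> x - P x) * h x)" by (rule inth[OF _ dB]) simp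
    have bound1: "norm (integral\<^sup>L \<mu> (\<lambda>x. \<psi> x - P x)) \<le> 2 * \<epsilon> * M"
    proof -
      have "norm (integral\<^sup>L \<mu> (\<lambda>x. \<psi> x - P x)) \<le> integral\<^sup>L \<mu> (\<lambda>x. norm (\<psi> x - P x))"
        by (rule integral_norm_bound)
      also have "\<dots> \<le> integral\<^sup>L \<mu> (\<lambda>x. 2 * \<epsilon>)"
      proof (rule integral_mono_AE)
        show "integrable \<mu> (\<lambda>x. norm (\<psi> x - P x))" using i\<psi> iP by simp
        show "integrable \<mu> (\<lambda>x. 2 * \<epsilon>)" by simp
        show "AE x in \<mu>. norm (\<psi> x - P x) \<le> 2 * \<epsilon>" using AEmu by eventually_elim (rule dB)
      qed
      also have "\<dots> = 2 * \<epsilon> * M" by (simp add: M_def)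
      finally show ?thesis .
    qed
    have bound2: "norm (LINT x|lborel. (\<psi> x - P x) * h x) \<le> 2 * \<epsilon> * H"
    proof -
      have "norm (LINT x|lborel. (\<psi> x - P x) * h x) \<le> (LINT x|lborel. norm ((\<psi> x - P x) * h x))"
        by (rule integral_norm_bound)
      also have "\<dots> \<le> (LINT x|lborel. 2 * \<epsilon> * norm (h x))"
      proof (rule integral_mono)
        show "integrable lborel (\<lambda>x. norm ((\<psi> x - P x) * h x))" using idh by simp
        show "integrable lborel (\<lambda>x. 2 * \<epsilon> * norm (h x))" using hi by simp
        fix x
        show "norm ((\<psi> x - P x) * h x) \<le> 2 * \<epsilon> * norm (h x)"
        proof (cases "h x = 0")
          case False
          hence "x \<in> {-1..1}" using hs by force
          thus ?thesis using dB[of x] by (simp add: norm_mult mult_right_mono)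
        qed simp
      qed
      also have "\<dots> = 2 * \<epsilon> * H" by (simp add: H_def)
      finally show ?thesis .
    qed
    have "integral\<^sup>L \<mu> \<psi> - (LINT x|lborel. \<psi> x * h x) =
          integral\<^sup>L \<mu> (\<lambda>x. \<psi> x - P x) - (LINT x|lborel. (\<psi> x - P x) * h x)"
      using i\<psi> iP i\<psi>h iPh Peq by (simp add: left_diff_distrib)
    hence "norm (integral\<^sup>L \<mu> \<psi> - (LINT x|lborel. \<psi> x * h x)) \<le> 2 * \<epsilon> * M + 2 * \<epsilon> * H"
      using bound1 bound2 norm_triangle_ineq4[of "integral\<^sup>L \<mu> (\<lambda>x. \<psi> x - P x)" "LINT x|lborel. (\<psi> x - P x) * h x"]
      by simp
    also have "\<dots> = e * ((M + H) / K)" using K0 by (simp add: \<epsilon>_def field_simps)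
    also have "\<dots> \<le> e * 1" using K0 e M0 H0 by (intro mult_left_mono) (simp_all add: K_def)
    finally show ?thesis by simp
  qed
  hence "norm (integral\<^sup>L \<mu> \<psi> - (LINT x|lborel. \<psi> x * h x)) \<le> 0" by (rule field_le_epsilon)
  moreover have "integrable lborel (\<lambda>x. \<psi> x * h x)" by (rule inth[OF _ B\<psi>]) simp
  ultimately show ?thesis by simp
qed

lemma real_no_recip_same_interval:
  fixes x y :: real and m :: int
  assumes xy: "x * y = 1" and "of_int m < x" "x < of_int m + 1" "of_int m < y" "y < of_int m + 1"
  shows False
proof -
  consider "m \<ge> 1" | "m \<le> -2" | "m = 0" | "m = -1" by linarith
  thus False
  proof cases
    case 1
    hence "(1::real) \<le> of_int m" by simp
    hence "1 < x" "1 < y" using assms by linarith+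
    hence "1 < x * y" by (rule less_1_mult)
    thus False using xy by simp
  next
    case 2
    hence "of_int m \<le> (-2::real)" by simp
    hence "1 < - x" "1 < - y" using assms by linarith+
    hence "1 < (- x) * (- y)" by (rule less_1_mult)
    thus False using xy by simp
  next
    case 3
    hence "0 < x" "x < 1" "0 < y" "y < 1" using assms by simp_all
    hence "x * y < 1 * 1" by (intro mult_strict_mono) auto
    thus False using xy by simp
  next
    case 4
    hence "0 < -x" "-x < 1" "0 < -y" "-y < 1" using assms by simp_all
    hence "(-x) * (-y) < 1 * 1" by (intro mult_strict_mono) auto
    thus False using xy by simp
  qed
qed

lemma adm_params:
  assumes adm: "admissible z z'" and t1: "z * z' = 1"
  shows "-1 < Re z \<and> Re z < 1 \<and> -1 < Re z' \<and> Re z' < 1"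
  using adm unfolding admissible_def
proof (elim disjE conjE exE)
  assume z': "z' = cnj z" and zi: "z \<notin> \<int>"
  have "z * cnj z = 1" using t1 z' by simp
  hence "complex_of_real ((Re z)\<^sup>2 + (Im z)\<^sup>2) = 1" using complex_mult_cnj[of z] by simp
  hence n: "Re z ^ 2 + Im z ^ 2 = 1" by (simp only: of_real_eq_1_iff)
  have "Re z \<noteq> 1" "Re z \<noteq> -1"
  proof -
    show "Re z \<noteq> 1"
    proof
      assume "Re z = 1"
      hence "Im z = 0" using n by simp
      hence "z = 1" using \<open>Re z = 1\<close> by (simp add: complex_eq_iff)
      thus False using zi by simp
    qed
    show "Re z \<noteq> -1"
    proof
      assume "Re z = -1"
      hence "Im z = 0" using n by simp
      hence "z = -1" using \<open>Re z = -1\<close> by (simp add: complex_eq_iff)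
      thus False using zi by simp
    qed
  qed
  moreover have "Re z ^ 2 \<le> 1" using n zero_le_power2[of "Im z"] by linarith
  hence "\<bar>Re z\<bar> \<le> 1" by (simp only: abs_square_le_1)
  ultimately show ?thesis using z' by auto
next
  fix m :: int
  assume "z \<in> \<real>" "z' \<in> \<real>" "of_int m < Re z" "Re z < of_int m + 1" "of_int m < Re z'" "Re z' < of_int m + 1"
  moreover have "Re z * Re z' = 1"
  proof -
    have "z = of_real (Re z)" "z' = of_real (Re z')" using \<open>z \<in> \<real>\<close> \<open>z' \<in> \<real>\<close> by (simp_all add: complex_is_Real_iff complex_eq_iff)
    hence "complex_of_real (Re z * Re z') = 1" using t1 by (metis of_real_mult)
    thus ?thesis by (metis of_real_eq_1_iff)
  qed
  ultimately have False using real_no_recip_same_interval by blast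
  thus ?thesis ..
qed

lemma test_function_continuous:
  assumes "test_function \<psi>"
  shows "continuous_on UNIV \<psi>"
proof -
  obtain D where D: "D 0 = \<psi>" "\<And>k x. (D k has_vector_derivative D (Suc k) x) (at x)"
    using assms unfolding test_function_def by blast
  have "isCont \<psi> x" for x using has_vector_derivative_continuous[OF D(2)[of 0 x]] D(1) by simp
  thus ?thesis by (simp add: continuous_at_imp_continuous_on)
qed


theorem corollary5p4:
  fixes z z' :: complex and \<mu> :: "real measure"
  assumes adm: "admissible z z'"
    and t1: "z * z' = 1"
    and sets_mu: "sets \<mu> = sets borel"
    and fin: "finite_measure \<mu>"
    and supp: "emeasure \<mu> (- {-1..1}) = 0"
    and moments: "\<forall>l::nat. complex_of_real (integral\<^sup>L \<mu> (\<lambda>x. x ^ l)) = sigma1_moment z z' l"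
  shows "\<forall>\<psi>. test_function \<psi> \<longrightarrow>
           integrable lborel (\<lambda>x. \<psi> x * conv (phi2 z (- z)) (phi2_minus (- z') z') x) \<and>
           integral\<^sup>L \<mu> \<psi> = (LINT x|lborel. \<psi> x * conv (phi2 z (- z)) (phi2_minus (- z') z') x)"
proof (intro allI impI)
  fix \<psi> :: "real \<Rightarrow> complex"
  assume tf: "test_function \<psi>"
  have zb: "-1 < Re z" "Re z < 1" "-1 < Re z'" "Re z' < 1" using adm_params[OF adm t1] by auto
  define F where "F = phi2 z (- z)"
  define G where "G = phi2_minus (- z') z'"
  have cs: "convsetup F G"
  proof (rule convsetup.intro)
    show "F \<in> borel_measurable borel" unfolding F_def by (rule phi2_measurable)
    show "G \<in> borel_measurable borel" unfolding G_def by (rule phi2_minus_measurable)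
    show "integrable lborel F" unfolding F_def by (rule phi2_integrable[OF zb(1,2)])
    show "integrable lborel G" unfolding G_def by (rule phi2_minus_integrable[OF zb(3,4)])
    show "F u \<noteq> 0 \<Longrightarrow> 0 < u \<and> u < 1" for u unfolding F_def by (rule phi2_supp)
    show "G v \<noteq> 0 \<Longrightarrow> -1 < v \<and> v < 0" for v unfolding G_def by (rule phi2_minus_supp)
  qed
  have mom: "complex_of_real (integral\<^sup>L \<mu> (\<lambda>x. x ^ l)) = (LINT x|lborel. complex_of_real (x ^ l) * conv F G x)" for l
    using moments conv_moment_value[OF zb t1, of l] unfolding F_def G_def by simp
  have "integrable lborel (\<lambda>x. \<psi> x * conv F G x) \<and> integral\<^sup>L \<mu> \<psi> = (LINT x|lborel. \<psi> x * conv F G x)"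
    by (rule moment_unique[OF sets_mu fin supp convsetup.conv_integrable[OF cs] convsetup.conv_supp[OF cs] mom test_function_continuous[OF tf]])
  thus "integrable lborel (\<lambda>x. \<psi> x * conv (phi2 z (- z)) (phi2_minus (- z') z') x) \<and>
           integral\<^sup>L \<mu> \<psi> = (LINT x|lborel. \<psi> x * conv (phi2 z (- z)) (phi2_minus (- z') z') x)"
    unfolding F_def G_def .
qed

end
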